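(* Fix $n\in\mathbb{N}$. For integers $0\le s\le t\le n$ let $\mathcal{M}(n,s,t)$ denote the number of monochromatic Schur triples on $\{1,\dots,n\}$ under the coloring $R^sB^{t-s}R^{n-t}$. Then the minimum of $\mathcal{M}(n,s,t)$ over all such integers $s,t$ is attained at \[ s_0=\Bigl\lfloor\frac{4n+2}{11}\Bigr\rfloor,\qquad t_0=\Bigl\lfloor\frac{10n}{11}\Bigr\rfloor . \]
   Context: A Schur triple on $[n]=\{1,\dots,n\}$ is an ordered triple $(x,y,z)\in[n]^3$ with $z=x+y$ (ordered, so $(x,y,x+y)$ and $(y,x,x+y)$ are distinct if $x\ne y$); it is monochromatic under a coloring $\chi$ if $\chi(x)=\chi(y)=\chi(z)$. The coloring $R^sB^{t-s}R^{n-t}$ colors $1,\dots,s$ red, $s+1,\dots,t$ blue, and $t+1,\dots,n$ red. *)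

theory Defs
  imports Main
begin

text \<open>Coloring R^s B^(t-s) R^(n-t): True = red, False = blue.\<close>
definition RBR_col :: "nat \<Rightarrow> nat \<Rightarrow> nat \<Rightarrow> bool" where
  "RBR_col s t x = (x \<le> s \<or> t < x)"

definition mono_schur :: "nat \<Rightarrow> (nat \<Rightarrow> bool) \<Rightarrow> nat" where
  "mono_schur n chi = card {(x, y, z). x \<in> {1..n} \<and> y \<in> {1..n} \<and> z \<in> {1..n} \<and> z = x + y
      \<and> chi x = chi y \<and> chi y = chi z}"

definition M :: "nat \<Rightarrow> nat \<Rightarrow> nat \<Rightarrow> nat" where
  "M n s t = mono_schur n (RBR_col s t)"

end

theory Submission
  imports Defs
begin


definition Nset :: "(nat \<Rightarrow> bool) \<Rightarrow> nat \<Rightarrow> nat set" where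
  "Nset chi z = {x \<in> {1..<z}. chi x = chi (z - x) \<and> chi (z - x) = chi z}"

definition S :: "nat \<Rightarrow> (nat \<Rightarrow> bool) \<Rightarrow> (nat \<times> nat \<times> nat) set" where
  "S n chi = {(x, y, z). x \<in> {1..n} \<and> y \<in> {1..n} \<and> z \<in> {1..n} \<and> z = x + y
      \<and> chi x = chi y \<and> chi y = chi z}"

lemma S_fin: "finite (S n chi)"
proof -
  have "S n chi \<subseteq> {1..n} \<times> {1..n} \<times> {1..n}" unfolding S_def by auto
  thus ?thesis by (rule finite_subset) auto
qed

lemma S_Suc: "S (Suc n) chi = S n chi \<union> (\<lambda>x. (x, Suc n - x, Suc n)) ` Nset chi (Suc n)"
proof (rule set_eqI)
  fix p :: "nat \<times> nat \<times> nat"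
  obtain x y z where p: "p = (x,y,z)" by (cases p) auto
  show "p \<in> S (Suc n) chi \<longleftrightarrow> p \<in> S n chi \<union> (\<lambda>x. (x, Suc n - x, Suc n)) ` Nset chi (Suc n)"
  proof (cases "z = Suc n")
    case True
    have "p \<in> S (Suc n) chi \<longleftrightarrow> x \<in> Nset chi (Suc n) \<and> y = Suc n - x"
      unfolding p S_def Nset_def True by auto
    moreover have "p \<notin> S n chi" unfolding p S_def True by auto
    moreover have "p \<in> (\<lambda>x. (x, Suc n - x, Suc n)) ` Nset chi (Suc n) \<longleftrightarrow> x \<in> Nset chi (Suc n) \<and> y = Suc n - x"
      unfolding p True by auto
    ultimately show ?thesis by blast
  next
    case False
    have "p \<notin> (\<lambda>x. (x, Suc n - x, Suc n)) ` Nset chi (Suc n)" unfolding p using False by auto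
    moreover have "p \<in> S (Suc n) chi \<longleftrightarrow> p \<in> S n chi" unfolding p S_def using False by auto
    ultimately show ?thesis by blast
  qed
qed

lemma card_S_Suc: "card (S (Suc n) chi) = card (S n chi) + card (Nset chi (Suc n))"
proof -
  have d: "S n chi \<inter> (\<lambda>x. (x, Suc n - x, Suc n)) ` Nset chi (Suc n) = {}"
    unfolding S_def by auto
  have i: "inj_on (\<lambda>x. (x, Suc n - x, Suc n)) (Nset chi (Suc n))"
    by (auto simp: inj_on_def)
  have f: "finite (Nset chi (Suc n))" unfolding Nset_def by auto
  show ?thesis unfolding S_Suc
    by (subst card_Un_disjoint) (auto simp: S_fin f d card_image[OF i])
qed

lemma S_0: "S 0 chi = {}" unfolding S_def by auto


definition Nf :: "int \<Rightarrow> int \<Rightarrow> int \<Rightarrow> int" where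
  "Nf s t z = (if z \<le> s then z - 1 else if z \<le> t then max 0 (z - 2*s - 1)
     else max 0 (2*s - z + 1) + 2 * min s (z - t - 1) + max 0 (z - 2*t - 1))"

lemma card_Nset:
  assumes st: "s \<le> t" and z: "1 \<le> z"
  shows "int (card (Nset (RBR_col s t) z)) = Nf (int s) (int t) (int z)"
proof (cases "z \<le> s")
  case True
  have "Nset (RBR_col s t) z = {1..<z}"
    unfolding Nset_def RBR_col_def using True by auto
  thus ?thesis using True z by (simp add: Nf_def of_nat_diff)
next
  case F1: False
  show ?thesis
  proof (cases "z \<le> t")
    case True
    have "Nset (RBR_col s t) z = {s+1..<z-s}"
      unfolding Nset_def RBR_col_def using True F1 by auto
    thus ?thesis using True F1 z by (simp add: Nf_def of_nat_diff)
  next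
    case False
    define A where "A = {z-s..s}"
    define B where "B = {1..<min (s+1) (z-t)}"
    define C where "C = {max (z-s) (t+1)..<z}"
    define D where "D = {t+1..<z-t}"
    have eq: "Nset (RBR_col s t) z = (A \<union> B) \<union> (C \<union> D)"
      unfolding Nset_def RBR_col_def A_def B_def C_def D_def using False F1 st by auto
    have d1: "A \<inter> B = {}" unfolding A_def B_def using st by auto
    have d2: "C \<inter> D = {}" unfolding C_def D_def using st by auto
    have d3: "(A \<union> B) \<inter> (C \<union> D) = {}" unfolding A_def B_def C_def D_def using st by auto
    have "card (Nset (RBR_col s t) z) = (card A + card B) + (card C + card D)"
    proof -
      have f: "finite A" "finite B" "finite C" "finite D"
        unfolding A_def B_def C_def D_def by auto
      have "card ((A \<union> B) \<union> (C \<union> D)) = card (A \<union> B) + card (C \<union> D)"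
        using f d3 by (intro card_Un_disjoint) auto
      also have "card (A \<union> B) = card A + card B" using f d1 by (intro card_Un_disjoint) auto
      also have "card (C \<union> D) = card C + card D" using f d2 by (intro card_Un_disjoint) auto
      finally show ?thesis unfolding eq .
    qed
    moreover have "int (card A) = max 0 (2 * int s - int z + 1)" unfolding A_def using False F1 by simp
    moreover have "int (card B) = min (int s) (int z - int t - 1)" unfolding B_def using False F1 by (simp add: min_def) arith
    moreover have "int (card C) = min (int s) (int z - int t - 1)" unfolding C_def using False F1 by (simp add: max_def min_def) arith
    moreover have "int (card D) = max 0 (int z - 2 * int t - 1)" unfolding D_def using False F1 by simp
    ultimately show ?thesis using False F1 by (simp add: Nf_def)
  qed
qed

definition T2 :: "int \<Rightarrow> int" where "T2 k = (if 0 \<le> k then k*(k-1) else 0)"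

lemma T2_step: "T2 (k+1) = T2 k + 2 * max k 0"
  unfolding T2_def by (cases "k = -1") (auto simp: algebra_simps max_def)

lemma T2_le1: "k \<le> 1 \<Longrightarrow> T2 k = 0"
  unfolding T2_def by (cases "k = 1"; cases "k = 0") auto

lemma T2_pos: "0 \<le> k \<Longrightarrow> T2 k = k*(k-1)"
  unfolding T2_def by auto

definition F2 :: "int \<Rightarrow> int \<Rightarrow> int \<Rightarrow> int" where
  "F2 s t n = T2 s - T2 t + 2*T2 (t-s) + T2 n - 2*T2 (n-s) + T2 (n-2*s)
     + 2*T2 (n-t) - 2*T2 (n-t-s) + T2 (n-2*t)"

definition G2 :: "int \<Rightarrow> int \<Rightarrow> int \<Rightarrow> int" where
  "G2 s t n = (if n \<le> s then T2 n else if n \<le> t then T2 s + T2 (n-2*s) else F2 s t n)"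

lemma L1: "n \<le> s \<Longrightarrow> G2 s t n = T2 n" unfolding G2_def by simp

lemma L2: assumes "0 \<le> s" "s \<le> n" "n \<le> t" shows "G2 s t n = T2 s + T2 (n-2*s)"
proof (cases "n \<le> s")
  case True
  hence "n = s" using assms by simp
  thus ?thesis using assms unfolding G2_def by (simp add: T2_le1)
qed (use assms in \<open>simp add: G2_def\<close>)

lemma L3: assumes "0 \<le> s" "s \<le> t" "t \<le> n" shows "G2 s t n = F2 s t n"
proof (cases "n \<le> t")
  case True
  hence n: "n = t" using assms by simp
  have z: "T2 (t - t - s) = 0" "T2 (t - 2*t) = 0" "T2 (t - t) = 0" using assms by (auto intro!: T2_le1)
  have "F2 s t n = T2 s + T2 (n - 2*s)" unfolding F2_def n z by simp
  moreover have "n \<le> s \<Longrightarrow> T2 (n - 2*s) = 0" using assms by (auto intro!: T2_le1)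
  moreover have "n \<le> s \<Longrightarrow> n = s" using assms by simp
  ultimately show ?thesis unfolding G2_def using n by auto
qed (use assms in \<open>simp add: G2_def\<close>)

lemma G2_step: assumes "0 \<le> s" "s \<le> t" "0 \<le> n"
  shows "G2 s t (n+1) = G2 s t n + 2 * Nf s t (n+1)"
proof -
  consider "n + 1 \<le> s" | "s < n+1" "n+1 \<le> t" | "t < n+1" by linarith
  thus ?thesis
  proof cases
    case 1
    thus ?thesis using assms by (simp add: L1 T2_step Nf_def)
  next
    case 2
    have "T2 (n + 1 - 2*s) = T2 (n - 2*s) + 2 * max (n - 2*s) 0"
      using T2_step[of "n - 2*s"] by (simp add: algebra_simps)
    thus ?thesis using assms 2 by (simp add: L2 Nf_def max_def)
  next
    case 3
    have e: "T2 (n + 1 - s) = T2 (n - s) + 2 * max (n - s) 0"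
      "T2 (n + 1 - 2*s) = T2 (n - 2*s) + 2 * max (n - 2*s) 0"
      "T2 (n + 1 - t) = T2 (n - t) + 2 * max (n - t) 0"
      "T2 (n + 1 - t - s) = T2 (n - t - s) + 2 * max (n - t - s) 0"
      "T2 (n + 1 - 2*t) = T2 (n - 2*t) + 2 * max (n - 2*t) 0"
      "T2 (n + 1) = T2 n + 2 * max n 0"
      using T2_step[of "n - s"] T2_step[of "n - 2*s"] T2_step[of "n - t"]
        T2_step[of "n - t - s"] T2_step[of "n - 2*t"] T2_step[of n]
      by (simp_all add: algebra_simps)
    have "G2 s t (n+1) = F2 s t (n+1)" using assms 3 by (simp add: L3)
    moreover have "G2 s t n = F2 s t n" using assms 3 by (simp add: L3)
    moreover have "F2 s t (n+1) = F2 s t n + 2 * Nf s t (n+1)"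
      unfolding F2_def e using assms 3 by (simp add: Nf_def max_def min_def)
    ultimately show ?thesis by simp
  qed
qed

lemma card_S_G2: assumes "s \<le> t"
  shows "2 * int (card (S n (RBR_col s t))) = G2 (int s) (int t) (int n)"
proof (induction n)
  case 0
  show ?case by (simp add: S_0 G2_def T2_def)
next
  case (Suc n)
  have "2 * int (card (S (Suc n) (RBR_col s t))) = 2 * int (card (S n (RBR_col s t))) + 2 * Nf (int s) (int t) (int (Suc n))"
    using card_Nset[OF assms, of "Suc n"] by (simp add: card_S_Suc add.commute)
  also have "... = G2 (int s) (int t) (int n + 1)"
    using Suc.IH G2_step[of "int s" "int t" "int n"] assms by (simp add: add.commute)
  finally show ?case by (simp add: add.commute)
qed



definition Q2 :: "int \<Rightarrow> int \<Rightarrow> int \<Rightarrow> int" where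
  "Q2 n s t = s*(s-1) + (t-2*s)*(t-2*s-1) + 2*(n-t)*(n-t-1)"

lemma sq_lin: fixes w p c :: int assumes "\<bar>p\<bar> \<le> c" shows "0 \<le> c*(w*w) + p*w"
proof -
  have c0: "0 \<le> c" using assms by simp
  have w: "\<bar>w\<bar> \<le> w*w"
  proof (cases "w = 0")
    case False
    hence "1 \<le> \<bar>w\<bar>" by simp
    hence "\<bar>w\<bar> * 1 \<le> \<bar>w\<bar> * \<bar>w\<bar>" by (intro mult_left_mono) auto
    thus ?thesis by (simp add: abs_mult_self_eq)
  qed simp
  have "\<bar>p*w\<bar> \<le> c*\<bar>w\<bar>" unfolding abs_mult using assms by (intro mult_right_mono) auto
  also have "c*\<bar>w\<bar> \<le> c*(w*w)" using w c0 by (intro mult_left_mono)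
  finally show ?thesis by linarith
qed

lemma quad_ge: fixes x y P K R :: int
  assumes "\<bar>P\<bar> \<le> 3" "\<bar>K\<bar> \<le> 2" "\<bar>R\<bar> \<le> 1"
  shows "0 \<le> 5*x^2 + 4*x*y + 3*y^2 + (P+K)*x + (K+R)*y"
proof -
  have "0 \<le> 3*(x*x) + P*x" by (rule sq_lin) (use assms in simp)
  moreover have "0 \<le> 2*((x+y)*(x+y)) + K*(x+y)" by (rule sq_lin) (use assms in simp)
  moreover have "0 \<le> 1*(y*y) + R*y" by (rule sq_lin) (use assms in simp)
  moreover have "5*x^2 + 4*x*y + 3*y^2 + (P+K)*x + (K+R)*y
      = (3*(x*x) + P*x) + (2*((x+y)*(x+y)) + K*(x+y)) + (1*(y*y) + R*y)"
    by (simp add: algebra_simps power2_eq_square)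
  ultimately show ?thesis by linarith
qed

lemma Q2_shift: fixes n q r s0 t0 a c s t :: int
  assumes "n = 11*q + r" "s0 = 4*q + a" "t0 = 10*q + c"
  shows "Q2 n s t - Q2 n s0 t0 = 5*(s-s0)^2 + 4*(s-s0)*(t0-t) + 3*(t0-t)^2
     + (2*a - 4*(c-2*a) + 1)*(s-s0) + (4*(r-c) - 2*(c-2*a) - 1)*(t0-t)"
  unfolding assms Q2_def by (simp add: algebra_simps power2_eq_square)

lemma case_r: fixes n q r s0 t0 a c s t P K R :: int
  assumes "n = 11*q + r" "s0 = 4*q + a" "t0 = 10*q + c"
    "2*a - 4*(c-2*a) + 1 = P + K" "4*(r-c) - 2*(c-2*a) - 1 = K + R"
    "\<bar>P\<bar> \<le> 3" "\<bar>K\<bar> \<le> 2" "\<bar>R\<bar> \<le> 1"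
  shows "Q2 n s0 t0 \<le> Q2 n s t"
  using Q2_shift[OF assms(1-3), of s t] quad_ge[OF assms(6-8), of "s-s0" "t0-t"] assms(4,5)
  by simp


lemma F2_c: fixes s t n :: int
  assumes "0 \<le> s" "s \<le> t" "t \<le> n" "n - t - s \<le> 1" "n - 2*t \<le> 1" "2*s \<le> n"
  shows "F2 s t n = Q2 n s t"
proof -
  have e: "T2 s = s*(s-1)" "T2 t = t*(t-1)" "T2 (t-s) = (t-s)*(t-s-1)" "T2 n = n*(n-1)"
    "T2 (n-s) = (n-s)*(n-s-1)" "T2 (n-2*s) = (n-2*s)*(n-2*s-1)" "T2 (n-t) = (n-t)*(n-t-1)"
    using assms by (auto intro!: T2_pos)
  have z: "T2 (n-t-s) = 0" "T2 (n-2*t) = 0" using assms by (auto intro!: T2_le1)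
  show ?thesis unfolding F2_def Q2_def e z by (simp add: algebra_simps)
qed

lemma F2_ge: fixes s t n :: int
  assumes "0 \<le> s" "s \<le> t" "t \<le> n"
  shows "\<exists>s' t'. Q2 n s' t' \<le> F2 s t n"
proof -
  have e: "T2 s = s*(s-1)" "T2 t = t*(t-1)" "T2 (t-s) = (t-s)*(t-s-1)" "T2 n = n*(n-1)"
    "T2 (n-s) = (n-s)*(n-s-1)" "T2 (n-t) = (n-t)*(n-t-1)"
    using assms by (auto intro!: T2_pos)
  consider "n \<le> 2*s" | "2*s \<le> n" "n - t - s \<le> 0" | "n - t - s \<ge> 0" "n \<le> 2*t" | "n \<ge> 2*t" by linarith
  thus ?thesis
  proof cases
    case 1
    have z: "T2 (n-2*s) = 0" "T2 (n-t-s) = 0" "T2 (n-2*t) = 0" using assms 1 by (auto intro!: T2_le1)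
    have "F2 s t n = Q2 n (t-s) t + ((n-t)*(n+t-2*s) + 2*(n-s)*(2*s-n) + (n-t))"
      unfolding F2_def Q2_def e z by (simp add: algebra_simps)
    moreover have "0 \<le> (n-t)*(n+t-2*s)" using assms by simp
    moreover have "0 \<le> (n-s)*(2*s-n)" using assms 1 by simp
    ultimately have "Q2 n (t-s) t \<le> F2 s t n" using assms by linarith
    thus ?thesis by blast
  next
    case 2
    have "F2 s t n = Q2 n s t" using F2_c assms 2 by simp
    thus ?thesis by (metis order_refl)
  next
    case 3
    have p: "T2 (n-2*s) = (n-2*s)*(n-2*s-1)" "T2 (n-t-s) = (n-t-s)*(n-t-s-1)"
      using assms 3 by (auto intro!: T2_pos)
    have z: "T2 (n-2*t) = 0" using assms 3 by (auto intro!: T2_le1)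
    have "F2 s t n = Q2 n (n-t) (n-s) + 2*((n-t-s)*(2*t-n))"
      unfolding F2_def Q2_def e z p by (simp add: algebra_simps)
    moreover have "0 \<le> (n-t-s)*(2*t-n)" using 3 by simp
    ultimately have "Q2 n (n-t) (n-s) \<le> F2 s t n" by linarith
    thus ?thesis by blast
  next
    case 4
    have p: "T2 (n-2*s) = (n-2*s)*(n-2*s-1)" "T2 (n-t-s) = (n-t-s)*(n-t-s-1)"
      "T2 (n-2*t) = (n-2*t)*(n-2*t-1)"
      using assms 4 by (auto intro!: T2_pos)
    have "F2 s t n = Q2 n (t-s) n + 2*(s*(t-s))"
      unfolding F2_def Q2_def e p by (simp add: algebra_simps)
    moreover have "0 \<le> s*(t-s)" using assms by simp
    ultimately have "Q2 n (t-s) n \<le> F2 s t n" by linarith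
    thus ?thesis by blast
  qed
qed


lemma case_nat: fixes n q r a c :: nat and P K R s t :: int
  assumes "n = 11*q + r" "(4*n+2) div 11 = 4*q + a" "(10*n) div 11 = 10*q + c"
    "2*int a - 4*(int c-2*int a) + 1 = P + K" "4*(int r- int c) - 2*(int c-2*int a) - 1 = K + R"
    "\<bar>P\<bar> \<le> 3" "\<bar>K\<bar> \<le> 2" "\<bar>R\<bar> \<le> 1"
  shows "Q2 (int n) (int ((4*n+2) div 11)) (int ((10*n) div 11)) \<le> Q2 (int n) s t"
  by (rule case_r[of _ "int q" "int r" _ "int a" _ "int c"]) (use assms in simp_all)

lemma Q2_min: fixes n :: nat and s t :: int
  shows "Q2 (int n) (int ((4*n+2) div 11)) (int ((10*n) div 11)) \<le> Q2 (int n) s t"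
proof -
  define q where "q = n div 11"
  define r where "r = n mod 11"
  have n: "n = 11*q + r" unfolding q_def r_def by simp
  have "r < 11" unfolding r_def by simp
  hence "r = 0 \<or> r = 1 \<or> r = 2 \<or> r = 3 \<or> r = 4 \<or> r = 5 \<or> r = 6 \<or> r = 7 \<or> r = 8 \<or> r = 9 \<or> r = 10" by presburger
  thus ?thesis
  proof (elim disjE)
    assume h: "r = 0"
    have n': "n = 11*q + 0" using n h by simp
    have d1: "(4*n+2) div 11 = 4*q + 0" using n' by presburger
    have d2: "(10*n) div 11 = 10*q + 0" using n' by presburger
    show ?thesis
      by (rule case_nat[OF n' d1 d2, of 1 0 "-1"]) simp_all
  next
    assume h: "r = 1"
    have n': "n = 11*q + 1" using n h by simp
    have d1: "(4*n+2) div 11 = 4*q + 0" using n' by presburger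
    have d2: "(10*n) div 11 = 10*q + 0" using n' by presburger
    show ?thesis
      by (rule case_nat[OF n' d1 d2, of "-1" 2 1]) simp_all
  next
    assume h: "r = 2"
    have n': "n = 11*q + 2" using n h by simp
    have d1: "(4*n+2) div 11 = 4*q + 0" using n' by presburger
    have d2: "(10*n) div 11 = 10*q + 1" using n' by presburger
    show ?thesis
      by (rule case_nat[OF n' d1 d2, of "-3" 0 1]) simp_all
  next
    assume h: "r = 3"
    have n': "n = 11*q + 3" using n h by simp
    have d1: "(4*n+2) div 11 = 4*q + 1" using n' by presburger
    have d2: "(10*n) div 11 = 10*q + 2" using n' by presburger
    show ?thesis
      by (rule case_nat[OF n' d1 d2, of 1 2 1]) simp_all
  next
    assume h: "r = 4"
    have n': "n = 11*q + 4" using n h by simp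
    have d1: "(4*n+2) div 11 = 4*q + 1" using n' by presburger
    have d2: "(10*n) div 11 = 10*q + 3" using n' by presburger
    show ?thesis
      by (rule case_nat[OF n' d1 d2, of "-3" 2 "-1"]) simp_all
  next
    assume h: "r = 5"
    have n': "n = 11*q + 5" using n h by simp
    have d1: "(4*n+2) div 11 = 4*q + 2" using n' by presburger
    have d2: "(10*n) div 11 = 10*q + 4" using n' by presburger
    show ?thesis
      by (rule case_nat[OF n' d1 d2, of 3 2 1]) simp_all
  next
    assume h: "r = 6"
    have n': "n = 11*q + 6" using n h by simp
    have d1: "(4*n+2) div 11 = 4*q + 2" using n' by presburger
    have d2: "(10*n) div 11 = 10*q + 5" using n' by presburger
    show ?thesis
      by (rule case_nat[OF n' d1 d2, of "-1" 2 "-1"]) simp_all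
  next
    assume h: "r = 7"
    have n': "n = 11*q + 7" using n h by simp
    have d1: "(4*n+2) div 11 = 4*q + 2" using n' by presburger
    have d2: "(10*n) div 11 = 10*q + 6" using n' by presburger
    show ?thesis
      by (rule case_nat[OF n' d1 d2, of "-3" 0 "-1"]) simp_all
  next
    assume h: "r = 8"
    have n': "n = 11*q + 8" using n h by simp
    have d1: "(4*n+2) div 11 = 4*q + 3" using n' by presburger
    have d2: "(10*n) div 11 = 10*q + 7" using n' by presburger
    show ?thesis
      by (rule case_nat[OF n' d1 d2, of 1 2 "-1"]) simp_all
  next
    assume h: "r = 9"
    have n': "n = 11*q + 9" using n h by simp
    have d1: "(4*n+2) div 11 = 4*q + 3" using n' by presburger
    have d2: "(10*n) div 11 = 10*q + 8" using n' by presburger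
    show ?thesis
      by (rule case_nat[OF n' d1 d2, of "-1" 0 "-1"]) simp_all
  next
    assume h: "r = 10"
    have n': "n = 11*q + 10" using n h by simp
    have d1: "(4*n+2) div 11 = 4*q + 3" using n' by presburger
    have d2: "(10*n) div 11 = 10*q + 9" using n' by presburger
    show ?thesis
      by (rule case_nat[OF n' d1 d2, of "-3" "-2" "-1"]) simp_all
  qed
qed


lemma facts0: fixes n :: nat
  defines "s0 \<equiv> (4 * n + 2) div 11" and "t0 \<equiv> (10 * n) div 11"
  shows "s0 \<le> t0 \<and> t0 \<le> n \<and> n \<le> t0 + s0 + 1 \<and> n \<le> 2*t0 + 1 \<and> 2*s0 \<le> n"
proof -
  have a: "s0 * 11 + (4*n+2) mod 11 = 4*n+2" "(4*n+2) mod 11 < 11" unfolding s0_def by simp_all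
  have b: "t0 * 11 + (10*n) mod 11 = 10*n" "(10*n) mod 11 < 11" unfolding t0_def by simp_all
  show ?thesis
  proof (cases "n \<le> 2")
    case True
    hence "n = 0 \<or> n = 1 \<or> n = 2" by linarith
    thus ?thesis unfolding s0_def t0_def by auto
  next
    case False
    thus ?thesis using a b by linarith
  qed
qed

theorem lemma2p2:
  fixes n :: nat
  defines "s0 \<equiv> (4 * n + 2) div 11" and "t0 \<equiv> (10 * n) div 11"
  shows "s0 \<le> t0 \<and> t0 \<le> n \<and>
         (\<forall>s t. s \<le> t \<and> t \<le> n \<longrightarrow> M n s0 t0 \<le> M n s t)"
proof -
  have F: "s0 \<le> t0 \<and> t0 \<le> n \<and> n \<le> t0 + s0 + 1 \<and> n \<le> 2*t0 + 1 \<and> 2*s0 \<le> n"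
    unfolding s0_def t0_def by (rule facts0)
  have st0: "s0 \<le> t0" "t0 \<le> n" using F by auto
  have M_eq: "\<And>s t. M n s t = card (S n (RBR_col s t))"
    unfolding M_def mono_schur_def S_def by simp
  have key: "\<And>s t. s \<le> t \<Longrightarrow> t \<le> n \<Longrightarrow> 2 * int (M n s t) = F2 (int s) (int t) (int n)"
    using card_S_G2 L3 M_eq by simp
  have c1: "n \<le> t0 + s0 + 1" "n \<le> 2*t0 + 1" "2*s0 \<le> n" using F by auto
  have m0: "2 * int (M n s0 t0) = Q2 (int n) (int s0) (int t0)"
    using key[OF st0] F2_c[of "int s0" "int t0" "int n"] st0 c1 by simp
  have "M n s0 t0 \<le> M n s t" if h: "s \<le> t" "t \<le> n" for s t
  proof -
    obtain s' t' where "Q2 (int n) s' t' \<le> F2 (int s) (int t) (int n)"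
      using F2_ge[of "int s" "int t" "int n"] h by auto
    moreover have "Q2 (int n) (int s0) (int t0) \<le> Q2 (int n) s' t'"
      unfolding s0_def t0_def by (rule Q2_min)
    ultimately have "2 * int (M n s0 t0) \<le> 2 * int (M n s t)" using m0 key[OF h] by linarith
    thus ?thesis by simp
  qed
  thus ?thesis using st0 by blast
qed

end
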